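(* Let $k\ge 1$ and let $G$ be a graph. Then $G$ is a $k$-OR-PCG, i.e. $G=\text{OR-PCG}_k(T_1,\ldots,T_k,I_1,\ldots,I_k)$ for some trees $T_1,\ldots,T_k$ with common leaf set $V(G)$ and intervals $I_1,\ldots,I_k$, if and only if there exist trees $T''_1,\ldots,T''_k$ with common leaf set $V(G)$ and a single interval $I$ of nonnegative reals such that $G=\text{OR-PCG}_k(T''_1,\ldots,T''_k,I,\ldots,I)$. The same equivalence holds with "OR-PCG" replaced by "AND-PCG" throughout.
   Context: All trees are unrooted with edges weighted by nonnegative real numbers; for leaves $u,v$ of a tree $T$, $d_T(u,v)$ is the sum of the weights on the unique path between $u$ and $v$. Given trees $T_1,\ldots,T_k$ with the same leaf set $L$ and (not necessarily disjoint) intervals $I_1,\ldots,I_k$ of nonnegative reals, $\text{OR-PCG}_k(T_1,\ldots,T_k,I_1,\ldots,I_k)$ is the graph with vertex set $L$ in which $\{u,v\}$ is an edge iff $d_{T_i}(u,v)\in I_i$ for at least one $i$; $\text{AND-PCG}_k(T_1,\ldots,T_k,I_1,\ldots,I_k)$ is the graph with vertex set $L$ in which $\{u,v\}$ is an edge iff $d_{T_i}(u,v)\in I_i$ for all $i$. A graph is a $k$-OR-PCG (resp. $k$-AND-PCG) if it equals such a graph for some choice of trees and intervals. *)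

theory Defs
  imports "HOL-Analysis.Analysis"
begin

record 'v wtree =
  tverts :: "'v set"
  tedges :: "'v set set"
  tweight :: "'v set \<Rightarrow> real"

definition is_tpath :: "'v wtree \<Rightarrow> 'v list \<Rightarrow> 'v \<Rightarrow> 'v \<Rightarrow> bool" where
  "is_tpath T p u v \<longleftrightarrow> p \<noteq> [] \<and> hd p = u \<and> last p = v \<and> distinct p \<and>
     set p \<subseteq> tverts T \<and>
     (\<forall>i. Suc i < length p \<longrightarrow> {p ! i, p ! Suc i} \<in> tedges T)"

definition is_wtree :: "'v wtree \<Rightarrow> bool" where
  "is_wtree T \<longleftrightarrow> finite (tverts T) \<and> tverts T \<noteq> {} \<and>
     tedges T \<subseteq> {{x, y} | x y. x \<in> tverts T \<and> y \<in> tverts T \<and> x \<noteq> y} \<and>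
     (\<forall>e\<in>tedges T. 0 \<le> tweight T e) \<and>
     (\<forall>u\<in>tverts T. \<forall>v\<in>tverts T. \<exists>!p. is_tpath T p u v)"

text \<open>Leaves: vertices of degree at most one (degree exactly one unless the tree
is a single vertex).\<close>
definition tleaves :: "'v wtree \<Rightarrow> 'v set" where
  "tleaves T = {v \<in> tverts T. card {e \<in> tedges T. v \<in> e} \<le> 1}"

definition tdist :: "'v wtree \<Rightarrow> 'v \<Rightarrow> 'v \<Rightarrow> real" where
  "tdist T u v = (let p = (THE p. is_tpath T p u v) in
     (\<Sum>i<length p - 1. tweight T {p ! i, p ! Suc i}))"

definition nonneg_interval :: "real set \<Rightarrow> bool" where
  "nonneg_interval I \<longleftrightarrow> is_interval I \<and> I \<subseteq> {0..}"

text \<open>The trees have vertex type 'a + nat; the leaf u of the graph is Inl u, and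
further (internal) vertices are available in unlimited supply.\<close>
definition tree_on_leaves :: "'a set \<Rightarrow> ('a + nat) wtree \<Rightarrow> bool" where
  "tree_on_leaves V T \<longleftrightarrow> is_wtree T \<and> tleaves T = Inl ` V"

definition or_pcg :: "'a set \<Rightarrow> nat \<Rightarrow> (nat \<Rightarrow> ('a + nat) wtree) \<Rightarrow> (nat \<Rightarrow> real set) \<Rightarrow> 'a set set" where
  "or_pcg V k T I = {{u, v} | u v. u \<in> V \<and> v \<in> V \<and> u \<noteq> v \<and>
      (\<exists>i<k. tdist (T i) (Inl u) (Inl v) \<in> I i)}"

definition and_pcg :: "'a set \<Rightarrow> nat \<Rightarrow> (nat \<Rightarrow> ('a + nat) wtree) \<Rightarrow> (nat \<Rightarrow> real set) \<Rightarrow> 'a set set" where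
  "and_pcg V k T I = {{u, v} | u v. u \<in> V \<and> v \<in> V \<and> u \<noteq> v \<and>
      (\<forall>i<k. tdist (T i) (Inl u) (Inl v) \<in> I i)}"

text \<open>A simple graph is given by a vertex set V and an edge set E of 2-subsets of V.\<close>
definition is_k_or_pcg :: "nat \<Rightarrow> 'a set \<Rightarrow> 'a set set \<Rightarrow> bool" where
  "is_k_or_pcg k V E \<longleftrightarrow> (\<exists>T I. (\<forall>i<k. tree_on_leaves V (T i) \<and> nonneg_interval (I i)) \<and>
      E = or_pcg V k T I)"

definition is_k_and_pcg :: "nat \<Rightarrow> 'a set \<Rightarrow> 'a set set \<Rightarrow> bool" where
  "is_k_and_pcg k V E \<longleftrightarrow> (\<exists>T I. (\<forall>i<k. tree_on_leaves V (T i) \<and> nonneg_interval (I i)) \<and>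
      E = and_pcg V k T I)"

end

theory Submission
  imports Defs
begin

definition mod_tree :: "real \<Rightarrow> real \<Rightarrow> 'v wtree \<Rightarrow> 'v wtree" where
  "mod_tree \<alpha> \<beta> T = T\<lparr>tweight := (\<lambda>e. \<alpha> * tweight T e + \<beta> * real (card (e \<inter> tleaves T)))\<rparr>"

lemma mod_tpath: "is_tpath (mod_tree \<alpha> \<beta> T) = is_tpath T"
  unfolding is_tpath_def mod_tree_def by (intro ext) simp

lemma mod_leaves: "tleaves (mod_tree \<alpha> \<beta> T) = tleaves T"
  by (simp add: tleaves_def mod_tree_def)

lemma mod_wtree:
  assumes "is_wtree T" "0 \<le> \<alpha>" "0 \<le> \<beta>"
  shows "is_wtree (mod_tree \<alpha> \<beta> T)"
  using assms unfolding is_wtree_def mod_tpath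
  by (simp add: mod_tree_def)

lemma mod_dist:
  assumes T: "is_wtree T" and x: "x \<in> tleaves T" and y: "y \<in> tleaves T" and xy: "x \<noteq> y"
  shows "tdist (mod_tree \<alpha> \<beta> T) x y = \<alpha> * tdist T x y + 2 * \<beta>"
proof -
  let ?L = "tleaves T"
  have xv: "x \<in> tverts T" "y \<in> tverts T" using x y by (auto simp: tleaves_def)
  have ex: "\<exists>!p. is_tpath T p x y" using T xv unfolding is_wtree_def by blast
  define p where "p = (THE p. is_tpath T p x y)"
  have pp: "is_tpath T p x y" using theI'[OF ex] p_def by simp
  have d1: "tdist (mod_tree \<alpha> \<beta> T) x y = (\<Sum>i<length p - 1. tweight (mod_tree \<alpha> \<beta> T) {p ! i, p ! Suc i})"
    unfolding tdist_def mod_tpath p_def Let_def by simp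
  have d2: "tdist T x y = (\<Sum>i<length p - 1. tweight T {p ! i, p ! Suc i})"
    unfolding tdist_def p_def Let_def by simp
  define n where "n = length p"
  have pne: "p \<noteq> []" and hd: "hd p = x" and lst: "last p = y" and dist: "distinct p"
    and edg: "\<And>i. Suc i < n \<Longrightarrow> {p ! i, p ! Suc i} \<in> tedges T"
    using pp unfolding is_tpath_def n_def by auto
  have hd0: "p ! 0 = x" using hd pne by (simp add: hd_conv_nth)
  have lstn: "p ! (n - 1) = y" using lst pne by (simp add: last_conv_nth n_def)
  have n2: "n \<ge> 2"
  proof (rule ccontr)
    assume "\<not> n \<ge> 2"
    then have "n - 1 = 0" by simp
    then show False using hd0 lstn xy by simp
  qed
  have fin: "finite (tedges T)"
  proof -
    have "tedges T \<subseteq> Pow (tverts T)" using T unfolding is_wtree_def by auto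
    moreover have "finite (tverts T)" using T unfolding is_wtree_def by auto
    ultimately show ?thesis by (meson finite_Pow_iff finite_subset)
  qed
  have neq: "\<And>i j. i < n \<Longrightarrow> j < n \<Longrightarrow> i \<noteq> j \<Longrightarrow> p ! i \<noteq> p ! j"
    using dist unfolding n_def by (simp add: nth_eq_iff_index_eq)
  have interior: "p ! j \<notin> ?L" if j: "0 < j" "j < n - 1" for j
  proof
    assume pj: "p ! j \<in> ?L"
    have e1: "{p ! (j - 1), p ! j} \<in> tedges T" using edg[of "j - 1"] j by simp
    have e2: "{p ! j, p ! Suc j} \<in> tedges T" using edg[of j] j by simp
    have "p ! (j - 1) \<noteq> p ! Suc j" "p ! (j - 1) \<noteq> p ! j" using neq j by auto
    then have ne: "{p ! (j - 1), p ! j} \<noteq> {p ! j, p ! Suc j}" by (auto simp: doubleton_eq_iff)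
    have "{{p ! (j - 1), p ! j}, {p ! j, p ! Suc j}} \<subseteq> {e \<in> tedges T. p ! j \<in> e}"
      using e1 e2 by auto
    then have "card {{p ! (j - 1), p ! j}, {p ! j, p ! Suc j}} \<le> card {e \<in> tedges T. p ! j \<in> e}"
      using fin by (intro card_mono) auto
    then have "2 \<le> card {e \<in> tedges T. p ! j \<in> e}" using ne by simp
    then show False using pj unfolding tleaves_def by simp
  qed
  have xL: "x \<in> ?L" and yL: "y \<in> ?L" using x y by auto
  have cardE: "real (card ({p ! i, p ! Suc i} \<inter> ?L)) = of_bool (p ! i \<in> ?L) + of_bool (p ! Suc i \<in> ?L)"
    if "i < n - 1" for i
  proof -
    have "p ! i \<noteq> p ! Suc i" using neq that by auto
    then show ?thesis by (cases "p ! i \<in> ?L"; cases "p ! Suc i \<in> ?L") auto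
  qed
  have s1: "(\<Sum>i<n - 1. (of_bool (p ! i \<in> ?L) :: real)) = 1"
  proof -
    have "(\<Sum>i<n - 1. (of_bool (p ! i \<in> ?L) :: real)) = (\<Sum>i<n - 1. if i = 0 then 1 else 0)"
    proof (rule sum.cong)
      fix i assume "i \<in> {..<n - 1}"
      then show "(of_bool (p ! i \<in> ?L) :: real) = (if i = 0 then 1 else 0)"
        using interior[of i] hd0 xL by auto
    qed simp
    also have "\<dots> = 1" using n2 by simp
    finally show ?thesis .
  qed
  have s2: "(\<Sum>i<n - 1. (of_bool (p ! Suc i \<in> ?L) :: real)) = 1"
  proof -
    have "(\<Sum>i<n - 1. (of_bool (p ! Suc i \<in> ?L) :: real)) = (\<Sum>i<n - 1. if i = n - 2 then 1 else 0)"
    proof (rule sum.cong)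
      fix i assume i: "i \<in> {..<n - 1}"
      show "(of_bool (p ! Suc i \<in> ?L) :: real) = (if i = n - 2 then 1 else 0)"
      proof (cases "i = n - 2")
        case True
        then have "Suc i = n - 1" using n2 by simp
        then show ?thesis using True lstn yL by simp
      next
        case False
        then show ?thesis using interior[of "Suc i"] i n2 by auto
      qed
    qed simp
    also have "\<dots> = 1" using n2 by simp
    finally show ?thesis .
  qed
  have "tdist (mod_tree \<alpha> \<beta> T) x y = (\<Sum>i<n - 1. \<alpha> * tweight T {p ! i, p ! Suc i}
      + \<beta> * (of_bool (p ! i \<in> ?L) + of_bool (p ! Suc i \<in> ?L)))"
    unfolding d1 n_def[symmetric]
    by (rule sum.cong) (auto simp: mod_tree_def cardE)
  also have "\<dots> = \<alpha> * (\<Sum>i<n - 1. tweight T {p ! i, p ! Suc i})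
      + \<beta> * ((\<Sum>i<n - 1. (of_bool (p ! i \<in> ?L) :: real)) + (\<Sum>i<n - 1. (of_bool (p ! Suc i \<in> ?L) :: real)))"
    by (simp only: sum.distrib sum_distrib_left distrib_left)
  also have "\<dots> = \<alpha> * tdist T x y + 2 * \<beta>"
    using s1 s2 d2 n_def by simp
  finally show ?thesis .
qed


lemma interval_fit:
  fixes D J :: "real set"
  assumes finD: "finite D" and J: "is_interval J"
  shows "\<exists>e0>0. \<forall>\<epsilon>. 0 < \<epsilon> \<longrightarrow> \<epsilon> \<le> e0 \<longrightarrow>
           (\<exists>\<alpha>>0. \<exists>\<beta>\<ge>0. \<forall>d\<in>D. (d \<in> J \<longleftrightarrow> \<alpha> * d + 2 * \<beta> \<in> {1..1 + \<epsilon>}))"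
proof (cases "D \<inter> J = {}")
  case True
  show ?thesis
  proof (rule exI[of _ 1], intro conjI allI impI)
    fix \<epsilon> :: real assume e: "0 < \<epsilon>" "\<epsilon> \<le> 1"
    define S where "S = (\<Sum>d\<in>D. \<bar>d\<bar>)"
    have "\<forall>d\<in>D. (d \<in> J \<longleftrightarrow> 1 * d + 2 * (2 + S) \<in> {1..1 + \<epsilon>})"
    proof
      fix d assume d: "d \<in> D"
      have "\<bar>d\<bar> \<le> S" unfolding S_def using d finD by (intro member_le_sum) auto
      then have "1 * d + 2 * (2 + S) > 1 + \<epsilon>" using e abs_ge_minus_self[of d] abs_ge_zero[of d] by (smt (verit))
      then show "(d \<in> J \<longleftrightarrow> 1 * d + 2 * (2 + S) \<in> {1..1 + \<epsilon>})" using True d by auto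
    qed
    moreover have "2 + S \<ge> 0" unfolding S_def by (simp add: sum_nonneg add_nonneg_nonneg)
    ultimately show "\<exists>\<alpha>>0. \<exists>\<beta>\<ge>0. \<forall>d\<in>D. (d \<in> J \<longleftrightarrow> \<alpha> * d + 2 * \<beta> \<in> {1..1 + \<epsilon>})"
      by (intro exI[of _ 1] exI[of _ "2 + S"]) auto
  qed simp
next
  case False
  define a where "a = Min (D \<inter> J)"
  define b where "b = Max (D \<inter> J)"
  have fDJ: "finite (D \<inter> J)" using finD by simp
  have aDJ: "a \<in> D \<inter> J" unfolding a_def using fDJ False by (rule Min_in)
  have bDJ: "b \<in> D \<inter> J" unfolding b_def using fDJ False by (rule Max_in)
  have inab: "a \<le> d \<and> d \<le> b" if "d \<in> D \<inter> J" for d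
    unfolding a_def b_def using fDJ that by auto
  have abJ: "d \<in> J" if "a \<le> d" "d \<le> b" for d
    using J aDJ bDJ that unfolding is_interval_1 by blast
  have ab: "a \<le> b" using inab aDJ by blast
  define m where "m = (a + b) / 2"
  define h where "h = (b - a) / 2"
  have h0: "h \<ge> 0" using ab h_def by simp
  define X where "X = D - J"
  have Xout: "\<bar>x - m\<bar> > h" if "x \<in> X" for x
  proof -
    have "\<not> (a \<le> x \<and> x \<le> b)" using abJ that X_def by auto
    then show ?thesis unfolding m_def h_def using ab by (cases "x \<le> (a+b)/2") (auto simp: abs_if field_simps)
  qed
  define r where "r = Min (insert (h + 1) ((\<lambda>x. \<bar>x - m\<bar>) ` X))"
  have finX: "finite X" using finD X_def by simp
  have rh: "r > h" unfolding r_def using finX Xout by (subst Min_gr_iff) auto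
  have rX: "r \<le> \<bar>x - m\<bar>" if "x \<in> X" for x
    unfolding r_def using finX that by (intro Min_le) auto
  have rh0: "r + h > 0" using rh h0 by linarith
  define e0 where "e0 = min 1 ((r + h) / (\<bar>m\<bar> + 1))"
  have e0pos: "e0 > 0" unfolding e0_def using rh0 by (simp add: abs_ge_zero add_pos_nonneg)
  show ?thesis
  proof (rule exI[of _ e0], intro conjI allI impI e0pos)
    fix \<epsilon> :: real assume e: "0 < \<epsilon>" "\<epsilon> \<le> e0"
    define \<alpha> where "\<alpha> = \<epsilon> / (r + h)"
    define \<beta> where "\<beta> = (1 + \<epsilon> / 2 - \<alpha> * m) / 2"
    have apos: "\<alpha> > 0" unfolding \<alpha>_def using e rh0 by simp
    have "\<epsilon> \<le> (r + h) / (\<bar>m\<bar> + 1)" using e e0_def by simp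
    then have "\<epsilon> * (\<bar>m\<bar> + 1) \<le> r + h" by (simp add: pos_le_divide_eq add_pos_nonneg)
    then have "\<epsilon> * \<bar>m\<bar> \<le> r + h" using e by (simp add: algebra_simps)
    then have "\<alpha> * \<bar>m\<bar> \<le> 1" unfolding \<alpha>_def using rh0 by (simp add: divide_le_eq)
    moreover have "\<alpha> * m \<le> \<alpha> * \<bar>m\<bar>" using apos by (intro mult_left_mono) auto
    ultimately have "\<alpha> * m \<le> 1" by (rule order_trans[rotated])
    then have bpos: "\<beta> \<ge> 0" unfolding \<beta>_def using e by simp
    have eq: "\<alpha> * d + 2 * \<beta> = \<alpha> * (d - m) + 1 + \<epsilon> / 2" for d
      unfolding \<beta>_def by (simp add: field_simps)
    have ah: "\<alpha> * h \<le> \<epsilon> / 2"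
    proof -
      have "\<epsilon> * h \<le> \<epsilon> * ((r + h) / 2)" using e rh by (intro mult_left_mono) auto
      then show ?thesis unfolding \<alpha>_def using rh0 by (simp add: divide_le_eq field_simps)
    qed
    have ar: "\<alpha> * r > \<epsilon> / 2"
    proof -
      have "\<epsilon> * r > \<epsilon> * ((r + h) / 2)" using e rh by (intro mult_strict_left_mono) auto
      then show ?thesis unfolding \<alpha>_def using rh0 by (simp add: field_simps)
    qed
    have "\<forall>d\<in>D. (d \<in> J \<longleftrightarrow> \<alpha> * d + 2 * \<beta> \<in> {1..1 + \<epsilon>})"
    proof
      fix d assume d: "d \<in> D"
      show "(d \<in> J \<longleftrightarrow> \<alpha> * d + 2 * \<beta> \<in> {1..1 + \<epsilon>})"
      proof (cases "d \<in> J")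
        case True
        then have "\<bar>d - m\<bar> \<le> h" using inab[of d] d unfolding m_def h_def by (cases "d \<le> (a+b)/2") (auto simp: abs_if field_simps)
        then have c1: "\<alpha> * \<bar>d - m\<bar> \<le> \<alpha> * h" using apos by (intro mult_left_mono) auto
        have c2: "\<bar>\<alpha> * (d - m)\<bar> = \<alpha> * \<bar>d - m\<bar>" using apos by (simp add: abs_mult)
        have "\<bar>\<alpha> * (d - m)\<bar> \<le> \<epsilon> / 2" unfolding c2 using c1 ah by (rule order_trans)
        then show ?thesis using True eq[of d] by (auto simp: abs_le_iff)
      next
        case False
        then have "x \<in> X" if "x = d" for x using d X_def that by auto
        then have "\<bar>d - m\<bar> \<ge> r" using rX by blast
        then have c1: "\<alpha> * r \<le> \<alpha> * \<bar>d - m\<bar>" using apos by (intro mult_left_mono) auto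
        have c2: "\<bar>\<alpha> * (d - m)\<bar> = \<alpha> * \<bar>d - m\<bar>" using apos by (simp add: abs_mult)
        have "\<epsilon> / 2 < \<bar>\<alpha> * (d - m)\<bar>" unfolding c2 using ar c1 by (rule less_le_trans)
        then show ?thesis using False eq[of d] by (auto simp: abs_less_iff abs_if split: if_splits)
      qed
    qed
    then show "\<exists>\<alpha>>0. \<exists>\<beta>\<ge>0. \<forall>d\<in>D. (d \<in> J \<longleftrightarrow> \<alpha> * d + 2 * \<beta> \<in> {1..1 + \<epsilon>})"
      using apos bpos by blast
  qed
qed


lemma key:
  fixes V :: "'a set" and T :: "nat \<Rightarrow> ('a + nat) wtree"
  assumes k: "k \<ge> 1" and finV: "finite V"
    and TI: "\<forall>i<k. tree_on_leaves V (T i) \<and> nonneg_interval (I i)"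
  shows "\<exists>T' J. (\<forall>i<k. tree_on_leaves V (T' i)) \<and> nonneg_interval J \<and>
     (\<forall>i<k. \<forall>u\<in>V. \<forall>v\<in>V. u \<noteq> v \<longrightarrow>
        (tdist (T' i) (Inl u) (Inl v) \<in> J \<longleftrightarrow> tdist (T i) (Inl u) (Inl v) \<in> I i))"
proof -
  define D where "D i = (\<lambda>(u, v). tdist (T i) (Inl u) (Inl v)) ` (V \<times> V)" for i
  have finD: "finite (D i)" for i unfolding D_def using finV by simp
  have "\<forall>i\<in>{..<k}. \<exists>e0>0. \<forall>\<epsilon>. 0 < \<epsilon> \<longrightarrow> \<epsilon> \<le> e0 \<longrightarrow>
           (\<exists>\<alpha>>0. \<exists>\<beta>\<ge>0. \<forall>d\<in>D i. (d \<in> I i \<longleftrightarrow> \<alpha> * d + 2 * \<beta> \<in> {1..1 + \<epsilon>}))"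
  proof
    fix i assume "i \<in> {..<k}"
    then have "is_interval (I i)" using TI unfolding nonneg_interval_def by auto
    then show "\<exists>e0>0. \<forall>\<epsilon>. 0 < \<epsilon> \<longrightarrow> \<epsilon> \<le> e0 \<longrightarrow>
           (\<exists>\<alpha>>0. \<exists>\<beta>\<ge>0. \<forall>d\<in>D i. (d \<in> I i \<longleftrightarrow> \<alpha> * d + 2 * \<beta> \<in> {1..1 + \<epsilon>}))"
      by (rule interval_fit[OF finD])
  qed
  from bchoice[OF this] obtain e0 where e0: "\<forall>i\<in>{..<k}. e0 i > 0 \<and> (\<forall>\<epsilon>. 0 < \<epsilon> \<longrightarrow> \<epsilon> \<le> e0 i \<longrightarrow>
           (\<exists>\<alpha>>0. \<exists>\<beta>\<ge>0. \<forall>d\<in>D i. (d \<in> I i \<longleftrightarrow> \<alpha> * d + 2 * \<beta> \<in> {1..1 + \<epsilon>})))"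
    by blast
  define \<epsilon> where "\<epsilon> = Min (e0 ` {..<k})"
  have "(0::nat) \<in> {..<k}" using k by simp
  then have ne: "e0 ` {..<k} \<noteq> {}" by blast
  have epos: "\<epsilon> > 0" unfolding \<epsilon>_def using ne e0 by (subst Min_gr_iff) auto
  have ele: "\<epsilon> \<le> e0 i" if "i < k" for i unfolding \<epsilon>_def using that by (intro Min_le) auto
  have "\<forall>i\<in>{..<k}. \<exists>ab. fst ab > 0 \<and> snd ab \<ge> 0 \<and>
          (\<forall>d\<in>D i. (d \<in> I i \<longleftrightarrow> fst ab * d + 2 * snd ab \<in> {1..1 + \<epsilon>}))"
  proof
    fix i assume i: "i \<in> {..<k}"
    have "\<forall>\<epsilon>. 0 < \<epsilon> \<longrightarrow> \<epsilon> \<le> e0 i \<longrightarrow>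
           (\<exists>\<alpha>>0. \<exists>\<beta>\<ge>0. \<forall>d\<in>D i. (d \<in> I i \<longleftrightarrow> \<alpha> * d + 2 * \<beta> \<in> {1..1 + \<epsilon>}))"
      using e0 i by blast
    then have "\<exists>\<alpha>>0. \<exists>\<beta>\<ge>0. \<forall>d\<in>D i. (d \<in> I i \<longleftrightarrow> \<alpha> * d + 2 * \<beta> \<in> {1..1 + \<epsilon>})"
      using epos ele[of i] i by simp
    then obtain \<alpha> \<beta> where "\<alpha> > 0" "\<beta> \<ge> 0" "\<forall>d\<in>D i. (d \<in> I i \<longleftrightarrow> \<alpha> * d + 2 * \<beta> \<in> {1..1 + \<epsilon>})"
      by blast
    then show "\<exists>ab. fst ab > 0 \<and> snd ab \<ge> 0 \<and>
          (\<forall>d\<in>D i. (d \<in> I i \<longleftrightarrow> fst ab * d + 2 * snd ab \<in> {1..1 + \<epsilon>}))"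
      by (intro exI[of _ "(\<alpha>, \<beta>)"]) auto
  qed
  from bchoice[OF this] obtain ab where ab: "\<forall>i\<in>{..<k}. fst (ab i) > 0 \<and> snd (ab i) \<ge> 0 \<and>
          (\<forall>d\<in>D i. (d \<in> I i \<longleftrightarrow> fst (ab i) * d + 2 * snd (ab i) \<in> {1..1 + \<epsilon>}))"
    by blast
  define T' where "T' i = mod_tree (fst (ab i)) (snd (ab i)) (T i)" for i
  show ?thesis
  proof (intro exI[of _ T'] exI[of _ "{1..1 + \<epsilon>}"] conjI allI impI ballI)
    fix i assume i: "i < k"
    have a1: "fst (ab i) \<ge> 0" "snd (ab i) \<ge> 0" using ab i by (auto intro: less_imp_le)
    show "tree_on_leaves V (T' i)" using TI i a1 unfolding T'_def tree_on_leaves_def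
      by (auto intro!: mod_wtree simp: mod_leaves)
  next
    show "nonneg_interval {1..1 + \<epsilon>}" unfolding nonneg_interval_def by (auto simp: is_interval_cc)
  next
    fix i u v assume i: "i < k" and u: "u \<in> V" and v: "v \<in> V" and uv: "u \<noteq> v"
    have tw: "is_wtree (T i)" and lv: "tleaves (T i) = Inl ` V" using TI i unfolding tree_on_leaves_def by auto
    have "tdist (T' i) (Inl u) (Inl v) = fst (ab i) * tdist (T i) (Inl u) (Inl v) + 2 * snd (ab i)"
      unfolding T'_def using tw lv u v uv by (intro mod_dist) auto
    moreover have "tdist (T i) (Inl u) (Inl v) \<in> D i" unfolding D_def using u v by force
    ultimately show "(tdist (T' i) (Inl u) (Inl v) \<in> {1..1 + \<epsilon>}) = (tdist (T i) (Inl u) (Inl v) \<in> I i)"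
      using ab i by auto
  qed
qed

lemma or_cong:
  assumes "\<And>i u v. i < k \<Longrightarrow> u \<in> V \<Longrightarrow> v \<in> V \<Longrightarrow> u \<noteq> v \<Longrightarrow>
     (tdist (T' i) (Inl u) (Inl v) \<in> I' i) = (tdist (T i) (Inl u) (Inl v) \<in> I i)"
  shows "or_pcg V k T' I' = or_pcg V k T I"
proof -
  have c: "(u \<in> V \<and> v \<in> V \<and> u \<noteq> v \<and> (\<exists>i<k. tdist (T' i) (Inl u) (Inl v) \<in> I' i)) =
           (u \<in> V \<and> v \<in> V \<and> u \<noteq> v \<and> (\<exists>i<k. tdist (T i) (Inl u) (Inl v) \<in> I i))" for u v
    using assms by auto
  show ?thesis unfolding or_pcg_def by (simp only: c)
qed

lemma and_cong:
  assumes "\<And>i u v. i < k \<Longrightarrow> u \<in> V \<Longrightarrow> v \<in> V \<Longrightarrow> u \<noteq> v \<Longrightarrow>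
     (tdist (T' i) (Inl u) (Inl v) \<in> I' i) = (tdist (T i) (Inl u) (Inl v) \<in> I i)"
  shows "and_pcg V k T' I' = and_pcg V k T I"
proof -
  have c: "(u \<in> V \<and> v \<in> V \<and> u \<noteq> v \<and> (\<forall>i<k. tdist (T' i) (Inl u) (Inl v) \<in> I' i)) =
           (u \<in> V \<and> v \<in> V \<and> u \<noteq> v \<and> (\<forall>i<k. tdist (T i) (Inl u) (Inl v) \<in> I i))" for u v
    using assms by auto
  show ?thesis unfolding and_pcg_def by (simp only: c)
qed

theorem theorem1:
  fixes k :: nat and V :: "'a set" and E :: "'a set set"
  assumes "k \<ge> 1"
    and "finite V"
    and "E \<subseteq> {{u, v} | u v. u \<in> V \<and> v \<in> V \<and> u \<noteq> v}"
  shows "(is_k_or_pcg k V E \<longleftrightarrow>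
           (\<exists>T I. (\<forall>i<k. tree_on_leaves V (T i)) \<and> nonneg_interval I \<and>
              E = or_pcg V k T (\<lambda>_. I)))
       \<and> (is_k_and_pcg k V E \<longleftrightarrow>
           (\<exists>T I. (\<forall>i<k. tree_on_leaves V (T i)) \<and> nonneg_interval I \<and>
              E = and_pcg V k T (\<lambda>_. I)))"
proof (intro conjI iffI)
  assume "is_k_or_pcg k V E"
  then obtain T I where TI: "\<forall>i<k. tree_on_leaves V (T i) \<and> nonneg_interval (I i)"
    and E: "E = or_pcg V k T I" unfolding is_k_or_pcg_def by (elim exE conjE) blast
  obtain T' J where T': "\<forall>i<k. tree_on_leaves V (T' i)" "nonneg_interval J"
    and eqv: "\<forall>i<k. \<forall>u\<in>V. \<forall>v\<in>V. u \<noteq> v \<longrightarrow>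
        (tdist (T' i) (Inl u) (Inl v) \<in> J \<longleftrightarrow> tdist (T i) (Inl u) (Inl v) \<in> I i)"
    using key[OF assms(1,2) TI] by blast
  have "or_pcg V k T' (\<lambda>_. J) = or_pcg V k T I"
    using eqv by (intro or_cong) auto
  then show "\<exists>T I. (\<forall>i<k. tree_on_leaves V (T i)) \<and> nonneg_interval I \<and> E = or_pcg V k T (\<lambda>_. I)"
    using T' E by (intro exI[of _ T'] exI[of _ J]) simp
next
  assume "\<exists>T I. (\<forall>i<k. tree_on_leaves V (T i)) \<and> nonneg_interval I \<and> E = or_pcg V k T (\<lambda>_. I)"
  then obtain T I where h: "\<forall>i<k. tree_on_leaves V (T i)" "nonneg_interval I" "E = or_pcg V k T (\<lambda>_. I)"
    by blast
  show "is_k_or_pcg k V E" unfolding is_k_or_pcg_def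
    by (rule exI[of _ T], rule exI[of _ "\<lambda>_. I"]) (simp add: h)
next
  assume "is_k_and_pcg k V E"
  then obtain T I where TI: "\<forall>i<k. tree_on_leaves V (T i) \<and> nonneg_interval (I i)"
    and E: "E = and_pcg V k T I" unfolding is_k_and_pcg_def by (elim exE conjE) blast
  obtain T' J where T': "\<forall>i<k. tree_on_leaves V (T' i)" "nonneg_interval J"
    and eqv: "\<forall>i<k. \<forall>u\<in>V. \<forall>v\<in>V. u \<noteq> v \<longrightarrow>
        (tdist (T' i) (Inl u) (Inl v) \<in> J \<longleftrightarrow> tdist (T i) (Inl u) (Inl v) \<in> I i)"
    using key[OF assms(1,2) TI] by blast
  have "and_pcg V k T' (\<lambda>_. J) = and_pcg V k T I"
    using eqv by (intro and_cong) auto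
  then show "\<exists>T I. (\<forall>i<k. tree_on_leaves V (T i)) \<and> nonneg_interval I \<and> E = and_pcg V k T (\<lambda>_. I)"
    using T' E by (intro exI[of _ T'] exI[of _ J]) simp
next
  assume "\<exists>T I. (\<forall>i<k. tree_on_leaves V (T i)) \<and> nonneg_interval I \<and> E = and_pcg V k T (\<lambda>_. I)"
  then obtain T I where h: "\<forall>i<k. tree_on_leaves V (T i)" "nonneg_interval I" "E = and_pcg V k T (\<lambda>_. I)"
    by blast
  show "is_k_and_pcg k V E" unfolding is_k_and_pcg_def
    by (rule exI[of _ T], rule exI[of _ "\<lambda>_. I"]) (simp add: h)
qed

end
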